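(* Let $L\ge2$ and $0\le p<1$, and let $(\eta_n)_{n\ge0}$ be the Markov chain on $\{0,1\}^L$ with transition function $Q$, started from the stationary distribution $\pi(\omega)=Z^{-1}\prod_{j=0}^{|\omega|-1}c_j/c_{L-j-1}$. Define $\rho_n=\mathbb E_\pi[\eta_0(0)\eta_n(0)]$ and $\bar\rho_n=\rho_n-\frac14$. Then $\rho_0=\frac12$, $\rho_1=\rho_2=\dots=\rho_{L-1}$, for every $n\ge L$ $$\bar\rho_n=\frac{2p-1}{L}\sum_{j=1}^L\bar\rho_{n-j},$$ and $\bar\rho_n\to0$ exponentially fast as $n\to\infty$ (i.e. $|\bar\rho_n|\le Cr^n$ for some $C<\infty$, $r<1$).
   Context: $\Omega=\{0,1\}^L$, $\omega=(\omega(0),\dots,\omega(L-1))$, $|\omega|=\sum_j\omega(j)$. The transition function $Q$ is $Q\big(\eta,(\eta(1),\dots,\eta(L-1),s)\big)=\frac1L\big(|\eta|p+(L-|\eta|)(1-p)\big)$ for $s=1$, $=\frac1L\big((L-|\eta|)p+|\eta|(1-p)\big)$ for $s=0$, and $Q(\eta,\omega)=0$ otherwise. $c_j=(1-p)(1-\frac jL)+\frac jLp$ and $Z$ is a normalizing constant; this $\pi$ is stationary for $Q$. *)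

theory Defs
  imports Complex_Main
begin

text \<open>State space \<Omega> = {0,1}^L, realised as boolean lists of length L;
  \<omega>(j) is \<open>\<omega> ! j\<close> (True = 1).\<close>

definition Omega :: "nat \<Rightarrow> bool list set" where
  "Omega L = {\<omega>. length \<omega> = L}"

definition weight :: "bool list \<Rightarrow> nat" where
  "weight \<omega> = length (filter id \<omega>)"

definition Qtr :: "nat \<Rightarrow> real \<Rightarrow> bool list \<Rightarrow> bool list \<Rightarrow> real" where
  "Qtr L p \<eta> \<omega> =
     (if \<omega> = tl \<eta> @ [True] then
        (real (weight \<eta>) * p + (real L - real (weight \<eta>)) * (1 - p)) / real L
      else if \<omega> = tl \<eta> @ [False] then
        ((real L - real (weight \<eta>)) * p + real (weight \<eta>) * (1 - p)) / real L
      else 0)"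

fun Qn :: "nat \<Rightarrow> real \<Rightarrow> nat \<Rightarrow> bool list \<Rightarrow> bool list \<Rightarrow> real" where
  "Qn L p 0 \<eta> \<omega> = (if \<eta> = \<omega> then 1 else 0)"
| "Qn L p (Suc n) \<eta> \<omega> = (\<Sum>\<xi>\<in>Omega L. Qn L p n \<eta> \<xi> * Qtr L p \<xi> \<omega>)"

definition cc :: "nat \<Rightarrow> real \<Rightarrow> nat \<Rightarrow> real" where
  "cc L p j = (1 - p) * (1 - real j / real L) + real j / real L * p"

definition piw :: "nat \<Rightarrow> real \<Rightarrow> bool list \<Rightarrow> real" where
  "piw L p \<omega> = (\<Prod>j<weight \<omega>. cc L p j / cc L p (L - j - 1))"

definition Zc :: "nat \<Rightarrow> real \<Rightarrow> real" where
  "Zc L p = (\<Sum>\<omega>\<in>Omega L. piw L p \<omega>)"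

definition stat :: "nat \<Rightarrow> real \<Rightarrow> bool list \<Rightarrow> real" where
  "stat L p \<omega> = piw L p \<omega> / Zc L p"

definition rho :: "nat \<Rightarrow> real \<Rightarrow> nat \<Rightarrow> real" where
  "rho L p n = (\<Sum>\<eta>\<in>Omega L. \<Sum>\<omega>\<in>Omega L.
      stat L p \<eta> * Qn L p n \<eta> \<omega> * of_bool (\<eta> ! 0) * of_bool (\<omega> ! 0))"

definition rhobar :: "nat \<Rightarrow> real \<Rightarrow> nat \<Rightarrow> real" where
  "rhobar L p n = rho L p n - 1/4"

end

theory Submission
  imports Defs "HOL-Library.Multiset"
begin

lemma finite_Omega: "finite (Omega L)"
  unfolding Omega_def using finite_lists_length_eq[of "UNIV::bool set" L] by simp

lemma weight_sum: "real (weight xs) = (\<Sum>i<length xs. of_bool (xs!i))"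
proof (induction xs)
  case Nil
  then show ?case by (simp add: weight_def)
next
  case (Cons a xs)
  have "(\<Sum>i<length (a#xs). of_bool ((a#xs)!i)::real) = of_bool a + (\<Sum>i<length xs. of_bool (xs!i))"
    by (simp only: length_Cons sum.lessThan_Suc_shift nth_Cons_0 nth_Cons_Suc)
  moreover have "real (weight (a#xs)) = of_bool a + real (weight xs)" by (simp add: weight_def)
  ultimately show ?case using Cons by simp
qed

lemma weight_le: "weight xs \<le> length xs" unfolding weight_def by simp

lemma cc_pos:
  assumes "L \<ge> 1" "0 \<le> p" "p < 1" "k < L"
  shows "cc L p k > 0"
proof -
  have "real k / real L < 1" using assms by (simp add: field_simps)
  then have "(1 - p) * (1 - real k / real L) > 0" using assms by simp
  moreover have "real k / real L * p \<ge> 0" using assms by simp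
  ultimately show ?thesis unfolding cc_def by linarith
qed

lemma piw_pos:
  assumes "L \<ge> 1" "0 \<le> p" "p < 1" "length \<omega> = L"
  shows "piw L p \<omega> > 0"
  unfolding piw_def
proof (rule prod_pos)
  fix j assume "j \<in> {..<weight \<omega>}"
  then have "j < L" using weight_le[of \<omega>] assms by auto
  then show "0 < cc L p j / cc L p (L - j - 1)"
    using cc_pos[OF assms(1-3)] by auto
qed

lemma Zc_pos:
  assumes "L \<ge> 1" "0 \<le> p" "p < 1"
  shows "Zc L p > 0"
  unfolding Zc_def
proof (rule sum_pos)
  show "finite (Omega L)" by (rule finite_Omega)
  show "Omega L \<noteq> {}" using Omega_def by (metis empty_iff length_replicate mem_Collect_eq)
  show "\<And>i. i \<in> Omega L \<Longrightarrow> 0 < piw L p i" using piw_pos[OF assms] Omega_def by auto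
qed

lemma stat_sum:
  assumes "L \<ge> 1" "0 \<le> p" "p < 1"
  shows "(\<Sum>\<omega>\<in>Omega L. stat L p \<omega>) = 1"
  using Zc_pos[OF assms] unfolding stat_def Zc_def by (simp add: sum_divide_distrib[symmetric])

definition mu where "mu L p n \<omega> = (\<Sum>\<eta>\<in>Omega L. stat L p \<eta> * of_bool (\<eta>!0) * Qn L p n \<eta> \<omega>)"
definition mom where "mom L p n i = (\<Sum>\<omega>\<in>Omega L. mu L p n \<omega> * of_bool (\<omega>!i))"
definition mass where "mass L p n = (\<Sum>\<omega>\<in>Omega L. mu L p n \<omega>)"

lemma rho_mom: "rho L p n = mom L p n 0"
  unfolding rho_def mom_def mu_def sum_distrib_right
  by (subst sum.swap) (simp add: mult_ac)

lemma mu_Suc: "mu L p (Suc n) \<omega> = (\<Sum>\<xi>\<in>Omega L. mu L p n \<xi> * Qtr L p \<xi> \<omega>)"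
  unfolding mu_def Qn.simps sum_distrib_left sum_distrib_right
  by (subst sum.swap) (simp add: mult_ac)

lemma mu_0: "\<omega> \<in> Omega L \<Longrightarrow> mu L p 0 \<omega> = stat L p \<omega> * of_bool (\<omega>!0)"
  unfolding mu_def by (simp add: finite_Omega if_distrib cong: if_cong)

lemma sum_Q: "(\<Sum>\<omega>\<in>Omega L. (\<Sum>\<xi>\<in>Omega L. g \<xi> * Qtr L p \<xi> \<omega>) * f \<omega>)
   = (\<Sum>\<xi>\<in>Omega L. g \<xi> * (\<Sum>\<omega>\<in>Omega L. Qtr L p \<xi> \<omega> * f \<omega>))"
  unfolding sum_distrib_left sum_distrib_right
  by (subst sum.swap) (simp add: mult_ac)

definition Q1 where "Q1 L p \<eta> = (real (weight \<eta>) * p + (real L - real (weight \<eta>)) * (1 - p)) / real L"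
definition Q0 where "Q0 L p \<eta> = ((real L - real (weight \<eta>)) * p + real (weight \<eta>) * (1 - p)) / real L"

lemma Q10: "L \<ge> 1 \<Longrightarrow> Q1 L p \<eta> + Q0 L p \<eta> = 1"
  unfolding Q1_def Q0_def by (simp add: field_simps)

lemma two_point:
  assumes "length \<xi> = L" "L \<ge> 1"
  shows "(\<Sum>\<omega>\<in>Omega L. Qtr L p \<xi> \<omega> * f \<omega>)
     = Q1 L p \<xi> * f (tl \<xi> @ [True]) + Q0 L p \<xi> * f (tl \<xi> @ [False])"
proof -
  let ?a = "tl \<xi> @ [True]" and ?b = "tl \<xi> @ [False]"
  have ab: "?a \<noteq> ?b" by simp
  have "\<And>\<omega>. Qtr L p \<xi> \<omega> * f \<omega> = (if \<omega> = ?a then Q1 L p \<xi> * f ?a else 0) + (if \<omega> = ?b then Q0 L p \<xi> * f ?b else 0)"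
    unfolding Qtr_def Q1_def Q0_def using ab by auto
  then have "(\<Sum>\<omega>\<in>Omega L. Qtr L p \<xi> \<omega> * f \<omega>) = (\<Sum>\<omega>\<in>Omega L. (if \<omega> = ?a then Q1 L p \<xi> * f ?a else 0) + (if \<omega> = ?b then Q0 L p \<xi> * f ?b else 0))"
    by simp
  also have "\<dots> = Q1 L p \<xi> * f ?a + Q0 L p \<xi> * f ?b"
  proof -
    have "?a \<in> Omega L" "?b \<in> Omega L" using assms by (auto simp: Omega_def)
    then show ?thesis by (simp add: sum.distrib finite_Omega)
  qed
  finally show ?thesis .
qed

lemma two_point':
  assumes "\<xi> \<in> Omega L" "L \<ge> 1"
  shows "(\<Sum>\<omega>\<in>Omega L. Qtr L p \<xi> \<omega> * f \<omega>)
     = Q1 L p \<xi> * f (tl \<xi> @ [True]) + Q0 L p \<xi> * f (tl \<xi> @ [False])"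
  using assms two_point Omega_def by auto

lemma mom_Suc_gen:
  assumes "L \<ge> 1"
  shows "mom L p (Suc n) i = (\<Sum>\<xi>\<in>Omega L. mu L p n \<xi> *
     (Q1 L p \<xi> * of_bool ((tl \<xi> @ [True])!i) + Q0 L p \<xi> * of_bool ((tl \<xi> @ [False])!i)))"
  unfolding mom_def mu_Suc sum_Q
  by (rule sum.cong[OF refl]) (simp only: two_point'[OF _ assms])

lemma mom_shift:
  assumes "L \<ge> 1" "Suc i < L"
  shows "mom L p (Suc n) i = mom L p n (Suc i)"
  unfolding mom_Suc_gen[OF assms(1)] unfolding mom_def
proof (rule sum.cong[OF refl])
  fix \<xi> assume "\<xi> \<in> Omega L"
  then have "length \<xi> = L" by (simp add: Omega_def)
  then have "i < length (tl \<xi>)" using assms by simp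
  then have "(tl \<xi> @ [b])!i = \<xi> ! Suc i" for b by (simp add: nth_append nth_tl)
  then show "mu L p n \<xi> * (Q1 L p \<xi> * of_bool ((tl \<xi> @ [True]) ! i) + Q0 L p \<xi> * of_bool ((tl \<xi> @ [False]) ! i))
     = mu L p n \<xi> * of_bool (\<xi> ! Suc i)"
    using Q10[OF assms(1), of p \<xi>] by (simp add: distrib_left[symmetric] mult.commute)
qed

lemma mass_Suc:
  assumes "L \<ge> 1"
  shows "mass L p (Suc n) = mass L p n"
proof -
  have "mass L p (Suc n) = (\<Sum>\<omega>\<in>Omega L. (\<Sum>\<xi>\<in>Omega L. mu L p n \<xi> * Qtr L p \<xi> \<omega>) * 1)"
    unfolding mass_def mu_Suc by simp
  also have "\<dots> = (\<Sum>\<xi>\<in>Omega L. mu L p n \<xi> * (\<Sum>\<omega>\<in>Omega L. Qtr L p \<xi> \<omega> * 1))"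
    by (rule sum_Q)
  also have "\<dots> = mass L p n" unfolding mass_def
    by (rule sum.cong[OF refl]) (simp only: two_point'[OF _ assms], simp add: Q10[OF assms])
  finally show ?thesis .
qed

lemma mass_const: "L \<ge> 1 \<Longrightarrow> mass L p n = mass L p 0"
  by (induction n) (simp_all add: mass_Suc)

lemma mass_0: "mass L p 0 = mom L p 0 0"
  unfolding mass_def mom_def by (rule sum.cong[OF refl]) (simp add: mu_0)

lemma Q1_alt:
  assumes "length \<xi> = L" "L \<ge> 1"
  shows "Q1 L p \<xi> = (1 - p) + (2*p - 1) / real L * (\<Sum>i<L. of_bool (\<xi>!i))"
proof -
  have w: "real (weight \<xi>) = (\<Sum>i<L. of_bool (\<xi>!i))" using weight_sum[of \<xi>] assms by simp
  have "(w * p + (real L - w) * (1 - p)) / real L = (1 - p) + (2*p - 1) / real L * w" for w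
    using assms by (simp add: field_simps)
  from this[of "real (weight \<xi>)"] show ?thesis unfolding Q1_def w .
qed

lemma mom_last:
  assumes "L \<ge> 1"
  shows "mom L p (Suc n) (L - 1) = (1 - p) * mass L p n + (2*p - 1) / real L * (\<Sum>i<L. mom L p n i)"
proof -
  have "mom L p (Suc n) (L - 1) = (\<Sum>\<xi>\<in>Omega L. mu L p n \<xi> * Q1 L p \<xi>)"
    unfolding mom_Suc_gen[OF assms]
  proof (rule sum.cong[OF refl])
    fix \<xi> assume "\<xi> \<in> Omega L"
    then have "length \<xi> = L" by (simp add: Omega_def)
    then have "(tl \<xi> @ [b])!(L-1) = b" for b by (simp add: nth_append)
    then show "mu L p n \<xi> * (Q1 L p \<xi> * of_bool ((tl \<xi> @ [True]) ! (L-1)) + Q0 L p \<xi> * of_bool ((tl \<xi> @ [False]) ! (L-1)))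
     = mu L p n \<xi> * Q1 L p \<xi>" by simp
  qed
  also have "\<dots> = (\<Sum>\<xi>\<in>Omega L. (1 - p) * mu L p n \<xi> + (2*p - 1) / real L * (\<Sum>i<L. mu L p n \<xi> * of_bool (\<xi>!i)))"
  proof (rule sum.cong[OF refl])
    fix \<xi> assume "\<xi> \<in> Omega L"
    then have "length \<xi> = L" by (simp add: Omega_def)
    then show "mu L p n \<xi> * Q1 L p \<xi> = (1 - p) * mu L p n \<xi> + (2*p - 1) / real L * (\<Sum>i<L. mu L p n \<xi> * of_bool (\<xi>!i))"
    proof -
      have "mu L p n \<xi> * ((1 - p) + (2*p - 1) / real L * S) = (1 - p) * mu L p n \<xi> + (2*p - 1) / real L * (mu L p n \<xi> * S)" for S
        by (simp add: algebra_simps)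
      then show ?thesis unfolding Q1_alt[OF \<open>length \<xi> = L\<close> assms] sum_distrib_left[of "mu L p n \<xi>", symmetric] .
    qed
  qed
  also have "\<dots> = (1 - p) * mass L p n + (2*p - 1) / real L * (\<Sum>i<L. mom L p n i)"
    unfolding mass_def mom_def sum.distrib sum_distrib_left[symmetric]
    by (subst sum.swap) (simp add: mult.commute)
  finally show ?thesis .
qed

lemma mom_gen:
  assumes "L \<ge> 1" "i < L"
  shows "mom L p k i = mom L p (k + i) 0"
  using assms(2)
proof (induction i arbitrary: k)
  case 0 then show ?case by simp
next
  case (Suc i)
  have "mom L p k (Suc i) = mom L p (Suc k) i" using mom_shift[OF assms(1) Suc.prems] by simp
  also have "\<dots> = mom L p (Suc k + i) 0" using Suc by simp
  finally show ?case by simp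
qed

definition AA where "AA L p k = (\<Prod>j<k. cc L p j)"

lemma BA:
  assumes "k \<le> L"
  shows "(\<Prod>j<k. cc L p (L - j - 1)) * AA L p (L - k) = AA L p L"
  using assms
proof (induction k)
  case 0 then show ?case by simp
next
  case (Suc k)
  have e: "L - k = Suc (L - Suc k)" using Suc.prems by simp
  have a: "AA L p (L - Suc k) * cc L p (L - Suc k) = AA L p (L - k)"
    unfolding AA_def e by simp
  have "(\<Prod>j<Suc k. cc L p (L - j - 1)) * AA L p (L - Suc k)
      = (\<Prod>j<k. cc L p (L - j - 1)) * (AA L p (L - Suc k) * cc L p (L - Suc k))"
    by (simp add: mult_ac)
  also have "\<dots> = (\<Prod>j<k. cc L p (L - j - 1)) * AA L p (L - k)" by (simp only: a)
  finally have "(\<Prod>j<Suc k. cc L p (L - j - 1)) * AA L p (L - Suc k) = (\<Prod>j<k. cc L p (L - j - 1)) * AA L p (L - k)" .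
  also have "\<dots> = AA L p L" using Suc.IH Suc.prems by simp
  finally show ?case .
qed

lemma AA_pos: "L \<ge> 1 \<Longrightarrow> 0 \<le> p \<Longrightarrow> p < 1 \<Longrightarrow> k \<le> L \<Longrightarrow> AA L p k > 0"
  unfolding AA_def by (rule prod_pos) (auto intro: cc_pos)

lemma F_alt:
  assumes "L \<ge> 1" "0 \<le> p" "p < 1" "k \<le> L"
  shows "(\<Prod>j<k. cc L p j / cc L p (L - j - 1)) = AA L p k * AA L p (L - k) / AA L p L"
proof -
  have "(\<Prod>j<k. cc L p j / cc L p (L - j - 1)) = AA L p k / (\<Prod>j<k. cc L p (L - j - 1))"
    unfolding AA_def by (rule prod_dividef)
  also have "(\<Prod>j<k. cc L p (L - j - 1)) = AA L p L / AA L p (L - k)"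
    using BA[OF assms(4), of p] AA_pos[OF assms(1-3), of "L - k"] by (simp add: field_simps)
  finally show ?thesis
    using AA_pos[OF assms(1-3), of "L - k"] AA_pos[OF assms(1-3), of L] by simp
qed

lemma weight_not: "weight (map Not xs) = length xs - weight xs"
proof -
  have "length (filter id xs) + length (filter (\<lambda>x. \<not> id x) xs) = length xs"
    by (rule sum_length_filter_compl)
  moreover have "filter id (map Not xs) = map Not (filter Not xs)"
    by (induction xs) auto
  moreover have "(\<lambda>x. \<not> id x) = Not" by auto
  ultimately show ?thesis unfolding weight_def by simp
qed

lemma stat_not:
  assumes "L \<ge> 1" "0 \<le> p" "p < 1" "length \<omega> = L"
  shows "stat L p (map Not \<omega>) = stat L p \<omega>"
proof -
  have w: "weight \<omega> \<le> L" using weight_le[of \<omega>] assms by simp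
  have "piw L p (map Not \<omega>) = piw L p \<omega>"
    unfolding piw_def weight_not assms(4)
    using F_alt[OF assms(1-3) w] F_alt[OF assms(1-3), of "L - weight \<omega>"] w
    by (simp add: mult.commute)
  then show ?thesis unfolding stat_def by simp
qed

lemma mom_0:
  "mom L p 0 i = (\<Sum>\<omega>\<in>Omega L. stat L p \<omega> * of_bool (\<omega>!0) * of_bool (\<omega>!i))"
  unfolding mom_def by (rule sum.cong[OF refl]) (simp add: mu_0)

lemma mom00:
  assumes "L \<ge> 1" "0 \<le> p" "p < 1"
  shows "mom L p 0 0 = 1/2"
proof -
  have m: "mom L p 0 0 = (\<Sum>\<omega>\<in>Omega L. stat L p \<omega> * of_bool (\<omega>!0))"
    unfolding mom_0 by (intro sum.cong) auto
  have "(\<Sum>\<omega>\<in>Omega L. stat L p \<omega> * of_bool (\<omega>!0)) = (\<Sum>\<omega>\<in>Omega L. stat L p \<omega> * of_bool (\<not> \<omega>!0))"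
  proof (rule sum.reindex_bij_witness[of _ "map Not" "map Not"])
    fix a assume "a \<in> Omega L"
    then have l: "length a = L" by (simp add: Omega_def)
    show "map Not (map Not a) = a" by (simp add: comp_def)
    show "map Not a \<in> Omega L" using l by (simp add: Omega_def)
    show "stat L p (map Not a) * of_bool (\<not> map Not a ! 0) = stat L p a * of_bool (a ! 0)"
      using stat_not[OF assms l] l assms by simp
  next
    fix a assume "a \<in> Omega L"
    then have l: "length a = L" by (simp add: Omega_def)
    show "map Not (map Not a) = a" by (simp add: comp_def)
    show "map Not a \<in> Omega L" using l by (simp add: Omega_def)
  qed
  moreover have "(\<Sum>\<omega>\<in>Omega L. stat L p \<omega> * of_bool (\<omega>!0)) + (\<Sum>\<omega>\<in>Omega L. stat L p \<omega> * of_bool (\<not> \<omega>!0)) = 1"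
  proof -
    have "\<And>\<omega>. stat L p \<omega> * of_bool (\<omega>!0) + stat L p \<omega> * of_bool (\<not> \<omega>!0) = stat L p \<omega>" by simp
    then show ?thesis unfolding sum.distrib[symmetric] using stat_sum[OF assms] by simp
  qed
  ultimately show ?thesis using m by simp
qed

lemma weight_mset: "weight xs = size (filter_mset id (mset xs))"
  unfolding weight_def by (metis mset_filter size_mset)

lemma swap_invol:
  assumes "1 < length a" "i < length a"
  shows "(a[1 := a!i, i := a!1])[1 := (a[1 := a!i, i := a!1])!i, i := (a[1 := a!i, i := a!1])!1] = a"
  using assms by (cases "i = 1") (auto simp: list_eq_iff_nth_eq nth_list_update)

lemma mom_exch:
  assumes "1 \<le> i" "i < L"
  shows "mom L p 0 i = mom L p 0 1"
  unfolding mom_0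
proof (rule sum.reindex_bij_witness[of _ "\<lambda>\<omega>. \<omega>[1 := \<omega>!i, i := \<omega>!1]" "\<lambda>\<omega>. \<omega>[1 := \<omega>!i, i := \<omega>!1]"])
  fix a assume "a \<in> Omega L"
  then have l: "length a = L" by (simp add: Omega_def)
  have l1: "1 < length a" using l assms by simp
  have li: "i < length a" using l assms by simp
  let ?s = "a[1 := a!i, i := a!1]"
  show "?s[1 := ?s!i, i := ?s!1] = a"
    using swap_invol[OF l1 li] .
  show "?s \<in> Omega L" using l by (simp add: Omega_def)
  have w: "weight ?s = weight a"
    unfolding weight_mset using mset_swap[OF li l1] by simp
  have "stat L p ?s = stat L p a" unfolding stat_def piw_def w ..
  moreover have "?s ! 0 = a ! 0" using l1 li assms by (simp add: nth_list_update)
  moreover have "?s ! 1 = a ! i" using l1 li by (cases "i = 1") (auto simp: nth_list_update)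
  ultimately show "stat L p ?s * of_bool (?s ! 0) * of_bool (?s ! 1) = stat L p a * of_bool (a ! 0) * of_bool (a ! i)"
    by simp
next
  fix a assume "a \<in> Omega L"
  then have l: "length a = L" by (simp add: Omega_def)
  have l1: "1 < length a" using l assms by simp
  have li: "i < length a" using l assms by simp
  show "(a[1 := a!i, i := a!1])[1 := (a[1 := a!i, i := a!1])!i, i := (a[1 := a!i, i := a!1])!1] = a"
    using swap_invol[OF l1 li] .
  show "a[1 := a!i, i := a!1] \<in> Omega L" using l by (simp add: Omega_def)
qed

lemma conv_exp:
  fixes f :: "nat \<Rightarrow> real"
  assumes K: "K \<ge> 1" and t0: "0 < \<theta>" and t1: "\<theta> < 1"
    and H: "\<And>j k. j*K \<le> k \<Longrightarrow> k < j*K + K \<Longrightarrow> \<bar>f k\<bar> \<le> B * \<theta>^j"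
  shows "\<exists>C r. 0 \<le> r \<and> r < 1 \<and> (\<forall>n. \<bar>f n\<bar> \<le> C * r^n)"
proof -
  define r where "r = root K \<theta>"
  have Kp: "0 < K" using K by simp
  have r0: "0 < r" unfolding r_def using t0 Kp by simp
  have r1: "r < 1" unfolding r_def using t1 Kp by simp
  have rK: "r^K = \<theta>" unfolding r_def using Kp t0 by (simp add: real_root_pow_pos2)
  have B0: "0 \<le> B" using H[of 0 0] K by simp
  show ?thesis
  proof (intro exI conjI allI)
    show "0 \<le> r" using r0 by simp
    show "r < 1" by (rule r1)
    fix n
    define j where "j = n div K"
    have n: "n = j*K + n mod K" unfolding j_def by simp
    have "\<bar>f n\<bar> \<le> B * \<theta>^j"
    proof (rule H)
      show "n < j*K + K" using n mod_less_divisor[OF Kp, of n] by linarith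
      show "j*K \<le> n" using n by linarith
    qed
    also have "\<theta>^j * \<theta> \<le> r^n"
    proof -
      have "r^n = (r^K)^j * r^(n mod K)" by (subst n) (simp add: power_add power_mult mult.commute)
      also have "\<dots> = \<theta>^j * r^(n mod K)" by (simp add: rK)
      finally have e: "r^n = \<theta>^j * r^(n mod K)" .
      have "r^K \<le> r^(n mod K)" using r0 r1 Kp by (intro power_decreasing) (simp_all add: less_imp_le)
      then show ?thesis unfolding e using rK t0 by (simp add: mult_left_mono)
    qed
    then have "\<theta>^j \<le> r^n / \<theta>" using t0 by (simp add: field_simps)
    then have "B * \<theta>^j \<le> B * (r^n / \<theta>)" using B0 by (rule mult_left_mono)
    finally show "\<bar>f n\<bar> \<le> B / \<theta> * r^n" by simp
  qed
qed

lemma sum_abs_bound: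
  fixes g :: "nat \<Rightarrow> real"
  assumes "\<And>i. i < L \<Longrightarrow> \<bar>g i\<bar> \<le> B"
  shows "\<bar>\<Sum>i<L. g i\<bar> \<le> real L * B"
proof -
  have "\<bar>\<Sum>i<L. g i\<bar> \<le> (\<Sum>i<L. \<bar>g i\<bar>)" by (rule sum_abs)
  also have "\<dots> \<le> (\<Sum>i<L. B)" by (rule sum_mono) (simp add: assms)
  finally show ?thesis by simp
qed

lemma rec_bound:
  fixes x :: "nat \<Rightarrow> real"
  assumes L1: "L \<ge> 1" and rec: "x k = a / real L * (\<Sum>i<L. x (k - L + i))"
    and b: "\<And>i. i < L \<Longrightarrow> \<bar>x (k - L + i)\<bar> \<le> B"
  shows "\<bar>x k\<bar> \<le> \<bar>a\<bar> * B"
proof -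
  have "\<bar>x k\<bar> = \<bar>a\<bar> / real L * \<bar>\<Sum>i<L. x (k - L + i)\<bar>"
    by (subst rec) (simp add: abs_mult)
  also have "\<dots> \<le> \<bar>a\<bar> / real L * (real L * B)"
    by (rule mult_left_mono[OF sum_abs_bound[OF b]]) simp_all
  also have "\<dots> = \<bar>a\<bar> * B" using L1 by simp
  finally show ?thesis .
qed

lemma window_contract:
  fixes x :: "nat \<Rightarrow> real"
  assumes L1: "L \<ge> 1" and a: "\<bar>a\<bar> \<le> 1"
    and rec: "\<And>k. k \<ge> L \<Longrightarrow> x k = a / real L * (\<Sum>i<L. x (k - L + i))"
    and bnd: "\<And>k. n \<le> k \<Longrightarrow> k < n + L \<Longrightarrow> \<bar>x k\<bar> \<le> B"
  shows "\<And>k. n + L \<le> k \<Longrightarrow> k < n + L + L \<Longrightarrow> \<bar>x k\<bar> \<le> \<bar>a\<bar> * B"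
proof -
  have "\<bar>x n\<bar> \<le> B" using bnd[of n] L1 by simp
  then have B0: "0 \<le> B" by (meson abs_ge_zero order_trans)
  have main: "m \<le> L \<Longrightarrow> (\<forall>k. n \<le> k \<and> k < n + L + m \<longrightarrow> \<bar>x k\<bar> \<le> B \<and> (n + L \<le> k \<longrightarrow> \<bar>x k\<bar> \<le> \<bar>a\<bar> * B))" for m
  proof (induction m)
    case 0
    then show ?case using bnd by auto
  next
    case (Suc m)
    then have IH: "\<forall>k. n \<le> k \<and> k < n + L + m \<longrightarrow> \<bar>x k\<bar> \<le> B \<and> (n + L \<le> k \<longrightarrow> \<bar>x k\<bar> \<le> \<bar>a\<bar> * B)" by simp
    have new: "\<bar>x (n + L + m)\<bar> \<le> \<bar>a\<bar> * B"
    proof (rule rec_bound[OF L1 rec])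
      show "L \<le> n + L + m" by simp
      fix i assume "i < L"
      then show "\<bar>x (n + L + m - L + i)\<bar> \<le> B" using IH Suc.prems by auto
    qed
    have "\<bar>a\<bar> * B \<le> B" using a B0 by (simp add: mult_left_le_one_le)
    show ?case
    proof (intro allI impI)
      fix k assume k: "n \<le> k \<and> k < n + L + Suc m"
      show "\<bar>x k\<bar> \<le> B \<and> (n + L \<le> k \<longrightarrow> \<bar>x k\<bar> \<le> \<bar>a\<bar> * B)"
      proof (cases "k = n + L + m")
        case True then show ?thesis using new \<open>\<bar>a\<bar> * B \<le> B\<close> by simp
      next
        case False then show ?thesis using IH k by simp
      qed
    qed
  qed
  fix k assume "n + L \<le> k" "k < n + L + L"
  then show "\<bar>x k\<bar> \<le> \<bar>a\<bar> * B" using main[of L] by auto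
qed

lemma decay_maxnorm:
  fixes x :: "nat \<Rightarrow> real"
  assumes L1: "L \<ge> 1" and a: "\<bar>a\<bar> < 1"
    and rec: "\<And>k. k \<ge> L \<Longrightarrow> x k = a / real L * (\<Sum>i<L. x (k - L + i))"
  shows "\<exists>C r. 0 \<le> r \<and> r < 1 \<and> (\<forall>n. \<bar>x n\<bar> \<le> C * r^n)"
proof -
  define \<theta> where "\<theta> = max \<bar>a\<bar> (1/2)"
  have t0: "0 < \<theta>" and t1: "\<theta> < 1" and ta: "\<bar>a\<bar> \<le> \<theta>" using a by (auto simp: \<theta>_def)
  define B where "B = (\<Sum>k<L. \<bar>x k\<bar>)"
  have B0: "0 \<le> B" unfolding B_def by (simp add: sum_nonneg)
  have W: "\<And>k. j*L \<le> k \<Longrightarrow> k < j*L + L \<Longrightarrow> \<bar>x k\<bar> \<le> B * \<theta>^j" for j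
  proof (induction j)
    case 0
    then show ?case unfolding B_def using member_le_sum[of k "{..<L}" "\<lambda>k. \<bar>x k\<bar>"] by simp
  next
    case (Suc j)
    have "\<bar>x k\<bar> \<le> \<bar>a\<bar> * (B * \<theta>^j)"
      using window_contract[OF L1 _ rec, of "j*L" "B * \<theta>^j" k] Suc a by (simp add: add.assoc)
    also have "\<dots> \<le> \<theta> * (B * \<theta>^j)" using ta B0 t0 by (intro mult_right_mono) simp_all
    finally show ?case by (simp add: mult_ac)
  qed
  show ?thesis by (rule conv_exp[OF L1 t0 t1 W])
qed

lemma osc_range:
  fixes x :: "nat \<Rightarrow> real"
  assumes rec2: "\<And>k. k \<ge> L \<Longrightarrow> x (Suc k) = \<alpha> * x k + (1 - \<alpha>) * x (k - L)"
    and a0: "0 \<le> \<alpha>" and a1: "\<alpha> \<le> 1"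
    and bnd: "\<And>k. n \<le> k \<Longrightarrow> k \<le> n + L \<Longrightarrow> m \<le> x k \<and> x k \<le> M"
  shows "n \<le> k \<Longrightarrow> k \<le> n + L + t \<Longrightarrow> m \<le> x k \<and> x k \<le> M"
proof (induction t arbitrary: k)
  case 0 then show ?case using bnd by simp
next
  case (Suc t)
  show ?case
  proof (cases "k = Suc (n + L + t)")
    case False then show ?thesis using Suc by simp
  next
    case True
    have r: "x k = \<alpha> * x (n + L + t) + (1 - \<alpha>) * x (n + L + t - L)"
      unfolding True by (rule rec2) simp
    have A: "m \<le> x (n + L + t) \<and> x (n + L + t) \<le> M" using Suc.IH by simp
    have B: "m \<le> x (n + L + t - L) \<and> x (n + L + t - L) \<le> M" using Suc.IH by simp
    have "\<alpha> * m + (1 - \<alpha>) * m \<le> x k" unfolding r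
      using A B a0 a1 by (intro add_mono mult_left_mono) simp_all
    moreover have "x k \<le> \<alpha> * M + (1 - \<alpha>) * M" unfolding r
      using A B a0 a1 by (intro add_mono mult_left_mono) simp_all
    ultimately show ?thesis by (simp add: algebra_simps)
  qed
qed

lemma osc_lower:
  fixes x :: "nat \<Rightarrow> real"
  assumes rec2: "\<And>k. k \<ge> L \<Longrightarrow> x (Suc k) = \<alpha> * x k + (1 - \<alpha>) * x (k - L)"
    and a0: "0 \<le> \<alpha>" and a1: "\<alpha> \<le> 1"
    and bnd: "\<And>k. n \<le> k \<Longrightarrow> k \<le> n + L \<Longrightarrow> m \<le> x k \<and> x k \<le> M"
    and mid: "(m + M) / 2 \<le> x (n + L + 1)"
  shows "n + L + 1 \<le> k \<Longrightarrow> k \<le> n + 2*L + 1 \<Longrightarrow> m + \<alpha>^L * (M - m) / 2 \<le> x k"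
proof -
  have rng: "m \<le> x k" if "n \<le> k" for k
    using osc_range[where x=x and L=L and \<alpha>=\<alpha> and n=n and m=m and M=M and k=k and t=k, OF rec2 a0 a1 bnd] that by simp
  have low: "i \<le> L \<Longrightarrow> m + \<alpha>^i * (x (n + L + 1) - m) \<le> x (n + L + 1 + i)" for i
  proof (induction i)
    case 0 then show ?case by simp
  next
    case (Suc i)
    have r: "x (n + L + 1 + Suc i) = \<alpha> * x (n + L + 1 + i) + (1 - \<alpha>) * x (n + L + 1 + i - L)"
      using rec2[of "n + L + 1 + i"] by simp
    have "m \<le> x (n + L + 1 + i - L)" by (rule rng) simp
    then have "(1 - \<alpha>) * m \<le> (1 - \<alpha>) * x (n + L + 1 + i - L)" using a1 by (simp add: mult_left_mono)
    moreover have "\<alpha> * (m + \<alpha>^i * (x (n + L + 1) - m)) \<le> \<alpha> * x (n + L + 1 + i)"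
      using Suc a0 by (simp add: mult_left_mono)
    ultimately have "\<alpha> * (m + \<alpha>^i * (x (n + L + 1) - m)) + (1 - \<alpha>) * m \<le> x (n + L + 1 + Suc i)"
      unfolding r by linarith
    then show ?case by (simp add: algebra_simps)
  qed
  assume k: "n + L + 1 \<le> k" "k \<le> n + 2*L + 1"
  define i where "i = k - (n + L + 1)"
  have ki: "k = n + L + 1 + i" and iL: "i \<le> L" using k by (simp_all add: i_def)
  have mM: "m \<le> M" using bnd[of n] by simp
  have d: "(M - m) / 2 \<le> x (n + L + 1) - m" using mid by simp
  have "\<alpha>^L \<le> \<alpha>^i" using iL a0 a1 by (intro power_decreasing) simp_all
  then have "\<alpha>^L * ((M - m) / 2) \<le> \<alpha>^i * (x (n + L + 1) - m)"
    using d mM a0 by (intro mult_mono) simp_all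
  then show "m + \<alpha>^L * (M - m) / 2 \<le> x k" using low[OF iL] ki by simp
qed

lemma osc_step:
  fixes x :: "nat \<Rightarrow> real"
  assumes rec2: "\<And>k. k \<ge> L \<Longrightarrow> x (Suc k) = \<alpha> * x k + (1 - \<alpha>) * x (k - L)"
    and a0: "0 \<le> \<alpha>" and a1: "\<alpha> \<le> 1"
    and bnd: "\<And>k. n \<le> k \<Longrightarrow> k \<le> n + L \<Longrightarrow> m \<le> x k \<and> x k \<le> M"
  shows "\<exists>m' M'. M' - m' \<le> (1 - \<alpha>^L/2) * (M - m) \<and>
     (\<forall>k. n + L + 1 \<le> k \<longrightarrow> k \<le> n + 2*L + 1 \<longrightarrow> m' \<le> x k \<and> x k \<le> M')"
proof -
  have rng: "m \<le> x k \<and> x k \<le> M" if "n \<le> k" for k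
    using osc_range[where x=x and L=L and \<alpha>=\<alpha> and n=n and m=m and M=M and k=k and t=k, OF rec2 a0 a1 bnd] that by simp
  show ?thesis
  proof (cases "(m + M) / 2 \<le> x (n + L + 1)")
    case True
    show ?thesis
    proof (intro exI conjI allI impI)
      show "M - (m + \<alpha>^L * (M - m) / 2) \<le> (1 - \<alpha>^L/2) * (M - m)" by (simp add: algebra_simps)
      fix k assume "n + L + 1 \<le> k" "k \<le> n + 2*L + 1"
      then show "m + \<alpha>^L * (M - m) / 2 \<le> x k" "x k \<le> M"
        using osc_lower[OF rec2 a0 a1 bnd True] rng[of k] by simp_all
    qed
  next
    case False
    define y where "y = (\<lambda>k. - x k)"
    have rec2y: "\<And>k. k \<ge> L \<Longrightarrow> y (Suc k) = \<alpha> * y k + (1 - \<alpha>) * y (k - L)"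
      unfolding y_def using rec2 by simp
    have bndy: "\<And>k. n \<le> k \<Longrightarrow> k \<le> n + L \<Longrightarrow> -M \<le> y k \<and> y k \<le> -m"
      unfolding y_def using bnd by fastforce
    have midy: "(-M + -m) / 2 \<le> y (n + L + 1)" unfolding y_def using False by simp
    show ?thesis
    proof (intro exI conjI allI impI)
      show "(M - \<alpha>^L * (M - m) / 2) - m \<le> (1 - \<alpha>^L/2) * (M - m)" by (simp add: algebra_simps)
      fix k assume k: "n + L + 1 \<le> k" "k \<le> n + 2*L + 1"
      have "-M + \<alpha>^L * (-m - -M) / 2 \<le> y k"
        using osc_lower[OF rec2y a0 a1 bndy midy k] .
      then show "x k \<le> M - \<alpha>^L * (M - m) / 2" unfolding y_def by (simp add: algebra_simps)
      show "m \<le> x k" using rng[of k] k by simp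
    qed
  qed
qed

lemma decay_osc:
  fixes x :: "nat \<Rightarrow> real"
  assumes L2: "L \<ge> 2"
    and rec: "\<And>k. k \<ge> L \<Longrightarrow> x k = -1 / real L * (\<Sum>i<L. x (k - L + i))"
  shows "\<exists>C r. 0 \<le> r \<and> r < 1 \<and> (\<forall>n. \<bar>x n\<bar> \<le> C * r^n)"
proof -
  define \<alpha> where "\<alpha> = 1 - 1 / real L"
  have a0: "0 < \<alpha>" and a1: "\<alpha> \<le> 1" using L2 by (simp_all add: \<alpha>_def field_simps)
  have sumid: "(\<Sum>i<L. x (Suc k - L + i)) + x (k - L) = (\<Sum>i<L. x (k - L + i)) + x k"
    if "k \<ge> L" for k
  proof -
    have "(\<Sum>i<Suc L. x (k - L + i)) = x (k - L + 0) + (\<Sum>i<L. x (k - L + Suc i))"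
      by (rule sum.lessThan_Suc_shift)
    moreover have "(\<Sum>i<Suc L. x (k - L + i)) = (\<Sum>i<L. x (k - L + i)) + x (k - L + L)"
      by simp
    moreover have "(\<Sum>i<L. x (k - L + Suc i)) = (\<Sum>i<L. x (Suc k - L + i))"
      using that by (intro sum.cong) (simp_all add: Suc_diff_le)
    ultimately show ?thesis using that by simp
  qed
  have rec2: "x (Suc k) = \<alpha> * x k + (1 - \<alpha>) * x (k - L)" if "k \<ge> L" for k
  proof -
    have e1: "x (Suc k) = -1 / real L * (\<Sum>i<L. x (Suc k - L + i))" using rec that by simp
    have e2: "x k = -1 / real L * (\<Sum>i<L. x (k - L + i))" using rec that by simp
    have Lp: "real L > 0" using L2 by simp
    from e1 e2 sumid[OF that] Lp show ?thesis unfolding \<alpha>_def by (simp add: field_simps)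
  qed
  have zero: "m \<le> 0 \<and> 0 \<le> M" if bnd: "\<And>k. n \<le> k \<Longrightarrow> k \<le> n + L \<Longrightarrow> m \<le> x k \<and> x k \<le> M" for n m M
  proof -
    have e: "x (n + L) = -1 / real L * (\<Sum>i<L. x (n + i))" using rec[of "n + L"] by simp
    have s1: "(\<Sum>i<L. m) \<le> (\<Sum>i<L. x (n + i))" using bnd by (intro sum_mono) simp
    have s2: "(\<Sum>i<L. x (n + i)) \<le> (\<Sum>i<L. M)" using bnd by (intro sum_mono) simp
    have Lp: "real L > 0" using L2 by simp
    have "x (n + L) \<le> - m" using s1 Lp unfolding e by (simp add: field_simps)
    moreover have "- M \<le> x (n + L)" using s2 Lp unfolding e by (simp add: field_simps)
    moreover have "m \<le> x (n + L) \<and> x (n + L) \<le> M" using bnd by simp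
    ultimately show ?thesis by linarith
  qed
  define \<theta> where "\<theta> = 1 - \<alpha>^L / 2"
  have aL0: "0 < \<alpha>^L" using a0 by simp
  have aL1: "\<alpha>^L \<le> 1" using a0 a1 by (simp add: power_le_one)
  have t0: "0 < \<theta>" and t1: "\<theta> < 1" using aL0 aL1 by (simp_all add: \<theta>_def)
  define B where "B = (\<Sum>k<Suc L. \<bar>x k\<bar>)"
  have W: "\<exists>m M. M - m \<le> \<theta>^j * (2 * B) \<and> (\<forall>k. j * Suc L \<le> k \<longrightarrow> k \<le> j * Suc L + L \<longrightarrow> m \<le> x k \<and> x k \<le> M)" for j
  proof (induction j)
    case 0
    show ?case
    proof (intro exI conjI allI impI)
      show "B - (- B) \<le> \<theta>^0 * (2 * B)" by simp
      fix k assume "0 * Suc L \<le> k" "k \<le> 0 * Suc L + L"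
      then have "\<bar>x k\<bar> \<le> B" unfolding B_def using member_le_sum[of k "{..<Suc L}" "\<lambda>k. \<bar>x k\<bar>"] by simp
      then show "- B \<le> x k" "x k \<le> B" by linarith+
    qed
  next
    case (Suc j)
    then obtain m M where mM: "M - m \<le> \<theta>^j * (2 * B)"
      and b: "\<And>k. j * Suc L \<le> k \<Longrightarrow> k \<le> j * Suc L + L \<Longrightarrow> m \<le> x k \<and> x k \<le> M" by blast
    obtain m' M' where m'M': "M' - m' \<le> \<theta> * (M - m)"
      and b': "\<And>k. j * Suc L + L + 1 \<le> k \<Longrightarrow> k \<le> j * Suc L + 2*L + 1 \<Longrightarrow> m' \<le> x k \<and> x k \<le> M'"
      using osc_step[where n="j * Suc L" and m=m and M=M and x=x and L=L and \<alpha>=\<alpha>, OF rec2 less_imp_le[OF a0] a1 b] unfolding \<theta>_def by auto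
    show ?case
    proof (intro exI conjI allI impI)
      have "\<theta> * (M - m) \<le> \<theta> * (\<theta>^j * (2 * B))" using mM t0 by simp
      then show "M' - m' \<le> \<theta>^Suc j * (2 * B)" using m'M' by simp
      fix k assume "Suc j * Suc L \<le> k" "k \<le> Suc j * Suc L + L"
      then show "m' \<le> x k" "x k \<le> M'" using b'[of k] by simp_all
    qed
  qed
  have H: "\<bar>x k\<bar> \<le> (2 * B) * \<theta>^j" if "j * Suc L \<le> k" "k < j * Suc L + Suc L" for j k
  proof -
    obtain m M where mM: "M - m \<le> \<theta>^j * (2 * B)"
      and b: "\<And>k. j * Suc L \<le> k \<Longrightarrow> k \<le> j * Suc L + L \<Longrightarrow> m \<le> x k \<and> x k \<le> M" using W[of j] by blast
    have z: "m \<le> 0 \<and> 0 \<le> M" by (rule zero[OF b])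
    have "m \<le> x k \<and> x k \<le> M" using b that by simp
    then show ?thesis using z mM by (simp add: abs_le_iff mult.commute)
  qed
  show ?thesis by (rule conv_exp[of "Suc L" \<theta> x "2 * B", OF _ t0 t1 H]) simp_all
qed

lemma decay:
  fixes x :: "nat \<Rightarrow> real"
  assumes L2: "L \<ge> 2" and a: "-1 \<le> a" "a < 1"
    and rec: "\<And>k. k \<ge> L \<Longrightarrow> x k = a / real L * (\<Sum>i<L. x (k - L + i))"
  shows "\<exists>C r. 0 \<le> r \<and> r < 1 \<and> (\<forall>n. \<bar>x n\<bar> \<le> C * r^n)"
proof (cases "a = -1")
  case True
  then show ?thesis using decay_osc[OF L2] rec by simp
next
  case False
  then have "\<bar>a\<bar> < 1" using a by simp
  then show ?thesis using decay_maxnorm[of L a x] L2 rec by simp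
qed

lemma reidx:
  fixes f :: "nat \<Rightarrow> real"
  assumes "n \<ge> L"
  shows "(\<Sum>i<L. f (n - L + i)) = (\<Sum>j=1..L. f (n - j))"
proof -
  have "(\<Sum>i<L. f (n - L + i)) = (\<Sum>i<L. f (n - L + (L - Suc i)))"
    by (rule sum.nat_diff_reindex[symmetric])
  also have "\<dots> = (\<Sum>i<L. f (n - Suc i))"
    using assms by (intro sum.cong) auto
  also have "\<dots> = (\<Sum>j=1..L. f (n - j))"
    using sum.atLeast1_atMost_eq[of "\<lambda>j. f (n - j)" L] by simp
  finally show ?thesis .
qed

theorem mainTheorem15:
  fixes L :: nat and p :: real
  assumes "L \<ge> 2" and "0 \<le> p" and "p < 1"
  shows "rho L p 0 = 1/2
    \<and> (\<forall>n\<in>{1..L-1}. rho L p n = rho L p 1)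
    \<and> (\<forall>n\<ge>L. rhobar L p n = (2*p - 1) / real L * (\<Sum>j=1..L. rhobar L p (n - j)))
    \<and> (\<exists>C r. 0 \<le> r \<and> r < 1 \<and> (\<forall>n. \<bar>rhobar L p n\<bar> \<le> C * r ^ n))"
proof -
  have L1: "L \<ge> 1" using assms by simp
  have Lp: "real L > 0" using assms by simp
  have m00: "mom L p 0 0 = 1/2" by (rule mom00[OF L1 assms(2,3)])
  have mass: "mass L p n = 1/2" for n using mass_const[OF L1, of p n] mass_0[of L p] m00 by simp
  have P1: "rho L p 0 = 1/2" using rho_mom[of L p 0] m00 by simp
  have P2: "\<forall>n\<in>{1..L-1}. rho L p n = rho L p 1"
  proof
    fix n assume "n \<in> {1..L-1}"
    then have n: "1 \<le> n" "n < L" using L1 by auto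
    have "rho L p n = mom L p 0 n" using rho_mom[of L p n] mom_gen[OF L1 n(2), of p 0] by simp
    also have "\<dots> = mom L p 0 1" by (rule mom_exch[OF n])
    also have "\<dots> = rho L p 1" using rho_mom[of L p 1] mom_gen[OF L1, of 1 p 0] assms by simp
    finally show "rho L p n = rho L p 1" .
  qed
  have rrec: "rho L p n = (1 - p) / 2 + (2*p - 1) / real L * (\<Sum>i<L. rho L p (n - L + i))" if "n \<ge> L" for n
  proof -
    have "rho L p n = mom L p (Suc (n - L)) (L - 1)"
      using rho_mom[of L p n] mom_gen[OF L1, of "L - 1" p "Suc (n - L)"] that L1 by simp
    also have "\<dots> = (1 - p) * mass L p (n - L) + (2*p - 1) / real L * (\<Sum>i<L. mom L p (n - L) i)"
      by (rule mom_last[OF L1])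
    also have "(\<Sum>i<L. mom L p (n - L) i) = (\<Sum>i<L. rho L p (n - L + i))"
    proof (intro sum.cong refl)
      fix i assume "i \<in> {..<L}"
      then show "mom L p (n - L) i = rho L p (n - L + i)"
        using rho_mom[of L p "n - L + i"] mom_gen[OF L1, of i p "n - L"] by simp
    qed
    finally show ?thesis using mass[of "n - L"] by simp
  qed
  have brec: "rhobar L p n = (2*p - 1) / real L * (\<Sum>i<L. rhobar L p (n - L + i))" if "n \<ge> L" for n
  proof -
    have "(\<Sum>i<L. rhobar L p (n - L + i)) = (\<Sum>i<L. rho L p (n - L + i)) - real L / 4"
      unfolding rhobar_def by (simp add: sum_subtractf)
    moreover have "rho L p n - 1/4 = (2*p - 1) / real L * ((\<Sum>i<L. rho L p (n - L + i)) - real L / 4)"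
      using rrec[OF that] Lp by (simp add: field_simps)
    ultimately show ?thesis by (simp only: rhobar_def[of L p n])
  qed
  have P3: "\<forall>n\<ge>L. rhobar L p n = (2*p - 1) / real L * (\<Sum>j=1..L. rhobar L p (n - j))"
    using brec reidx by simp
  have P4: "\<exists>C r. 0 \<le> r \<and> r < 1 \<and> (\<forall>n. \<bar>rhobar L p n\<bar> \<le> C * r ^ n)"
    by (rule decay[OF assms(1) _ _ brec]) (use assms in simp_all)
  show ?thesis using P1 P2 P3 P4 by blast
qed

end
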